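(* Let $B$ be a connected building set on $[n]$. Then $$F(P_B)=\sum_{v}F(T_v),$$ where the sum runs over all vertices $v$ of the nestohedron $P_B$ and $T_v$ is the $B$-tree of $v$.
   Context: A building set on a finite set $V$ is a collection $B$ of nonempty subsets of $V$ such that $\{v\}\in B$ for all $v\in V$ and such that $I,J\in B$, $I\cap J\neq\emptyset$ imply $I\cup J\in B$; it is connected if $V\in B$. The nestohedron of $B$ is $P_B=\sum_{I\in B}\mathrm{Conv}\{e_i: i\in I\}\subset\mathbb{R}^V$. For a convex polytope $Q\subset\mathbb{R}^n$, $f:[n]\to\mathbb{N}=\{1,2,\dots\}$ is $Q$-generic if $x\mapsto\sum_i f(i)x_i$ attains its maximum over $Q$ at a unique point, and $F(Q)=\sum_{f\ Q\text{-generic}}x_{f(1)}\cdots x_{f(n)}$. For a connected building set $B$ on $[n]$, a nested set is a subcollection $N\subseteq B\setminus\{[n]\}$ such that (N1) any two members of $N$ are either comparable by inclusion or disjoint, and (N2) the union of any $p\ge2$ pairwise disjoint members of $N$ does not belong to $B$. The facets of $P_B$ are $F_I=P_B\cap\{x:\sum_{i\in I}x_i=|\{J\in B:J\subseteq I\}|\}$ for $I\in B\setminus\{[n]\}$, and $v\mapsto N_v=\{I: v\in F_I\}$ is a bijection from the vertices of $P_B$ to the maximal nested sets. For a vertex $v$ and $I\in N_v\cup\{[n]\}$, the set $I\setminus\bigcup\{J\in N_v:J\subsetneq I\}$ consists of a single element $i_I$, and $I\mapsto i_I$ is a bijection $N_v\cup\{[n]\}\to[n]$. The poset $P_v$ on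 $[n]$ is defined by $i_I\le i_J$ iff $I\subseteq J$; its Hasse diagram is a rooted tree $T_v$ (the $B$-tree of $v$) with root $i_{[n]}$. For a rooted tree $T$, a $T$-partition is a function $f$ from the vertices to $\mathbb{N}$ with $f(u)<f(w)$ whenever $w$ is the parent of $u$, and $F(T)=\sum_f\prod_u x_{f(u)}$ over all $T$-partitions. *)

theory Defs
  imports "HOL-Analysis.Analysis" "HOL-Library.Multiset"
begin

text \<open>The ground set [n] is rendered as the universe of a finite type 'a;
  points of R^V are vectors of type real^'a.\<close>

definition building_set :: "'a set set \<Rightarrow> bool" where
  "building_set B \<longleftrightarrow>
     (\<forall>I\<in>B. I \<noteq> {}) \<and> (\<forall>v. {v} \<in> B) \<and>
     (\<forall>I\<in>B. \<forall>J\<in>B. I \<inter> J \<noteq> {} \<longrightarrow> I \<union> J \<in> B)"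

definition connected_building_set :: "('a::finite) set set \<Rightarrow> bool" where
  "connected_building_set B \<longleftrightarrow> building_set B \<and> UNIV \<in> B"

definition simplex_of :: "('a::finite) set \<Rightarrow> (real^'a) set" where
  "simplex_of I = convex hull ((\<lambda>i. axis i 1) ` I)"

definition nestohedron :: "('a::finite) set set \<Rightarrow> (real^'a) set" where
  "nestohedron B = {(\<Sum>I\<in>B. p I) | p. \<forall>I\<in>B. p I \<in> simplex_of I}"

definition generic :: "(real^'a::finite) set \<Rightarrow> ('a \<Rightarrow> nat) \<Rightarrow> bool" where
  "generic Q f \<longleftrightarrow>
     (\<exists>!x. x \<in> Q \<and> (\<forall>y\<in>Q. (\<Sum>i\<in>UNIV. real (f i) * y $ i) \<le> (\<Sum>i\<in>UNIV. real (f i) * x $ i)))"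

definition vertices :: "(real^'a::finite) set \<Rightarrow> (real^'a) set" where
  "vertices P = {v. v extreme_point_of P}"

definition facet :: "('a::finite) set set \<Rightarrow> 'a set \<Rightarrow> (real^'a) set" where
  "facet B I = nestohedron B \<inter>
     {x. (\<Sum>i\<in>I. x $ i) = real (card {J\<in>B. J \<subseteq> I})}"

definition nested_of :: "('a::finite) set set \<Rightarrow> (real^'a) \<Rightarrow> 'a set set" where
  "nested_of B v = {I \<in> B - {UNIV}. v \<in> facet B I}"

definition elem_of :: "('a::finite) set set \<Rightarrow> (real^'a) \<Rightarrow> 'a set \<Rightarrow> 'a" where
  "elem_of B v I = (THE i. i \<in> I - \<Union>{J \<in> nested_of B v. J \<subset> I})"

definition bleq :: "('a::finite) set set \<Rightarrow> (real^'a) \<Rightarrow> 'a \<Rightarrow> 'a \<Rightarrow> bool" where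
  "bleq B v i j \<longleftrightarrow>
     (\<exists>I\<in>nested_of B v \<union> {UNIV}. \<exists>J\<in>nested_of B v \<union> {UNIV}.
        i = elem_of B v I \<and> j = elem_of B v J \<and> I \<subseteq> J)"

definition bless :: "('a::finite) set set \<Rightarrow> (real^'a) \<Rightarrow> 'a \<Rightarrow> 'a \<Rightarrow> bool" where
  "bless B v i j \<longleftrightarrow> bleq B v i j \<and> i \<noteq> j"

definition tree_parent :: "('a::finite) set set \<Rightarrow> (real^'a) \<Rightarrow> 'a \<Rightarrow> 'a \<Rightarrow> bool" where
  "tree_parent B v u w \<longleftrightarrow> bless B v u w \<and> \<not> (\<exists>z. bless B v u z \<and> bless B v z w)"

definition tree_partition :: "('a::finite) set set \<Rightarrow> (real^'a) \<Rightarrow> ('a \<Rightarrow> nat) \<Rightarrow> bool" where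
  "tree_partition B v f \<longleftrightarrow> (\<forall>u. 0 < f u) \<and> (\<forall>u w. tree_parent B v u w \<longrightarrow> f u < f w)"

text \<open>The monomial x_{f(1)}...x_{f(n)} is encoded by the multiset of values of f.
  A formal power series sum over a set of f's is encoded by its coefficient function.\<close>
definition monomial_of :: "('a::finite \<Rightarrow> nat) \<Rightarrow> nat multiset" where
  "monomial_of f = image_mset f (mset_set UNIV)"

definition F_poly_coeff :: "(real^'a::finite) set \<Rightarrow> nat multiset \<Rightarrow> nat" where
  "F_poly_coeff Q M = card {f. (\<forall>i. 0 < f i) \<and> generic Q f \<and> monomial_of f = M}"

definition F_tree_coeff :: "('a::finite) set set \<Rightarrow> (real^'a) \<Rightarrow> nat multiset \<Rightarrow> nat" where
  "F_tree_coeff B v M = card {f. tree_partition B v f \<and> monomial_of f = M}"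

end

theory Submission
  imports Defs
begin

lemma nesto_hull: "nestohedron (B::('a::finite) set set) = convex hull (\<Sum>I\<in>B. (\<lambda>i. axis i (1::real)) ` I)"
proof -
  have "nestohedron B = (\<Sum>I\<in>B. simplex_of I)"
    unfolding nestohedron_def by (subst set_sum_alt) auto
  also have "\<dots> = convex hull (\<Sum>I\<in>B. (\<lambda>i. axis i (1::real)) ` I)"
    unfolding simplex_of_def convex_hull_set_sum ..
  finally show ?thesis .
qed

lemma nesto_polyhedron: "polyhedron (nestohedron (B::('a::finite) set set))"
  unfolding nesto_hull
  by (intro polytope_imp_polyhedron polytope_convex_hull finite_set_sum) auto

definition Lw :: "('a::finite \<Rightarrow> real) \<Rightarrow> real^'a \<Rightarrow> real" where
  "Lw w x = (\<Sum>i\<in>UNIV. w i * x$i)"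

definition sbox :: "('a::finite) set \<Rightarrow> (real^'a) set" where
  "sbox I = {p. (\<forall>k. 0 \<le> p$k) \<and> (\<forall>k. k\<notin>I \<longrightarrow> p$k = 0) \<and> sum (\<lambda>k. p$k) UNIV = 1}"

lemma axis_comp: "axis i (1::real) $ k = (if k = i then 1 else 0)"
  by (simp add: axis_def)

lemma simplex_sub: "simplex_of I \<subseteq> sbox I"
  unfolding simplex_of_def
proof (rule hull_minimal)
  show "(\<lambda>i. axis i 1) ` I \<subseteq> sbox I"
    by (auto simp: sbox_def axis_comp)
  show "convex (sbox I)"
    unfolding convex_def sbox_def
    by (auto simp: sum.distrib sum_distrib_left[symmetric])
qed

lemma axis_in_simplex: "i \<in> I \<Longrightarrow> axis i 1 \<in> simplex_of I"
  unfolding simplex_of_def by (rule hull_inc) auto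

lemma Lw_axis: "Lw w (axis m 1) = w m"
  unfolding Lw_def axis_comp by (subst sum.remove[of _ m]) auto

lemma Lw_sum: "Lw w (sum p C) = (\<Sum>J\<in>C. Lw w (p J))"
  by (simp add: Lw_def sum_distrib_left sum.swap[of _ C])

lemma Lw_le_simplex:
  assumes "p \<in> simplex_of I" "\<And>k. k \<in> I \<Longrightarrow> w k \<le> t"
  shows "Lw w p \<le> t"
proof -
  from assms(1) simplex_sub have p: "p \<in> sbox I" by auto
  have "Lw w p \<le> (\<Sum>k\<in>UNIV. t * p$k)"
    unfolding Lw_def
  proof (rule sum_mono)
    fix k show "w k * p $ k \<le> t * p $ k"
      using p assms(2)[of k] by (cases "k \<in> I") (auto simp: sbox_def intro: mult_right_mono)
  qed
  also have "\<dots> = t" using p by (simp add: sbox_def sum_distrib_left[symmetric])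
  finally show ?thesis .
qed

definition umax :: "('a \<Rightarrow> real) \<Rightarrow> 'a set \<Rightarrow> 'a \<Rightarrow> bool" where
  "umax w I m \<longleftrightarrow> m \<in> I \<and> (\<forall>k\<in>I. k \<noteq> m \<longrightarrow> w k < w m)"

lemma umax_le: "umax w I m \<Longrightarrow> k \<in> I \<Longrightarrow> w k \<le> w m"
  unfolding umax_def by (cases "k = m") auto

lemma Lw_eq_simplex:
  assumes "p \<in> simplex_of I" "umax w I m" "Lw w p = w m"
  shows "p = axis m 1"
proof -
  from assms(1) simplex_sub have p: "p \<in> sbox I" by auto
  have s1: "(\<Sum>k\<in>UNIV. p$k) = 1" using p by (simp add: sbox_def)
  have "(\<Sum>k\<in>UNIV. (w m - w k) * p$k) = w m * (\<Sum>k\<in>UNIV. p$k) - Lw w p"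
    by (simp add: Lw_def algebra_simps sum_subtractf sum_distrib_left)
  also have "\<dots> = 0" using s1 assms(3) by simp
  finally have z: "(\<Sum>k\<in>UNIV. (w m - w k) * p$k) = 0" .
  have nn: "\<forall>k\<in>UNIV. 0 \<le> (w m - w k) * p$k"
  proof
    fix k show "0 \<le> (w m - w k) * p$k"
      using p umax_le[OF assms(2), of k] by (cases "k \<in> I") (auto simp: sbox_def)
  qed
  have all0: "\<forall>k\<in>UNIV. (w m - w k) * p$k = 0"
    using sum_nonneg_eq_0_iff[of UNIV "\<lambda>k. (w m - w k) * p$k"] nn z by auto
  have o: "\<And>k. k \<noteq> m \<Longrightarrow> p$k = 0"
  proof -
    fix k assume "k \<noteq> m"
    show "p$k = 0"
    proof (cases "k \<in> I")
      case True
      with assms(2) \<open>k \<noteq> m\<close> have "w k < w m" by (auto simp: umax_def)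
      with all0 show ?thesis by (metis UNIV_I mult_eq_0_iff right_minus_eq less_irrefl)
    next
      case False with p show ?thesis by (auto simp: sbox_def)
    qed
  qed
  have "(\<Sum>k\<in>UNIV. p$k) = p$m"
    by (subst sum.remove[of _ m]) (auto simp: o)
  with s1 have "p$m = 1" by simp
  with o show ?thesis by (auto simp: vec_eq_iff axis_comp)
qed

definition pt :: "('a::finite) set set \<Rightarrow> ('a set \<Rightarrow> 'a) \<Rightarrow> real^'a" where
  "pt B c = (\<Sum>I\<in>B. axis (c I) 1)"

definition ismax :: "('a::finite \<Rightarrow> real) \<Rightarrow> (real^'a) set \<Rightarrow> real^'a \<Rightarrow> bool" where
  "ismax w P x \<longleftrightarrow> x \<in> P \<and> (\<forall>y\<in>P. Lw w y \<le> Lw w x)"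

lemma Lw_pt: "Lw w (pt B c) = (\<Sum>I\<in>B. w (c I))"
  by (simp add: pt_def Lw_sum Lw_axis)

lemma pt_mem: "\<forall>I\<in>B. c I \<in> I \<Longrightarrow> pt B c \<in> nestohedron B"
  unfolding nestohedron_def pt_def using axis_in_simplex by blast

lemma pt_cong: "\<forall>I\<in>B. c I = c' I \<Longrightarrow> pt B c = pt B c'"
  unfolding pt_def by (rule sum.cong) auto

lemma pt_ismax:
  assumes "\<forall>I\<in>B. c I \<in> I" "\<And>I k. I \<in> B \<Longrightarrow> k \<in> I \<Longrightarrow> w k \<le> w (c I)"
  shows "ismax w (nestohedron B) (pt B c)"
  unfolding ismax_def
proof (intro conjI ballI)
  show "pt B c \<in> nestohedron B" using pt_mem assms(1) .
  fix y assume "y \<in> nestohedron B"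
  then obtain p where y: "y = sum p B" and p: "\<forall>I\<in>B. p I \<in> simplex_of I"
    unfolding nestohedron_def by blast
  have "Lw w y = (\<Sum>I\<in>B. Lw w (p I))" by (simp add: y Lw_sum)
  also have "\<dots> \<le> (\<Sum>I\<in>B. w (c I))"
    by (rule sum_mono, rule Lw_le_simplex) (use p assms(2) in auto)
  finally show "Lw w y \<le> Lw w (pt B c)" by (simp add: Lw_pt)
qed

lemma pt_unique:
  assumes "\<forall>I\<in>B. umax w I (c I)" "y \<in> nestohedron B" "Lw w y = Lw w (pt B c)"
  shows "y = pt B c"
proof -
  obtain p where y: "y = sum p B" and p: "\<forall>I\<in>B. p I \<in> simplex_of I"
    using assms(2) unfolding nestohedron_def by blast
  have le: "\<forall>I\<in>B. Lw w (p I) \<le> w (c I)"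
    using p assms(1) by (auto intro!: Lw_le_simplex elim: umax_le)
  have "(\<Sum>I\<in>B. w (c I) - Lw w (p I)) = 0"
    using assms(3) by (simp add: sum_subtractf y Lw_sum Lw_pt)
  then have "\<forall>I\<in>B. w (c I) - Lw w (p I) = 0"
    using sum_nonneg_eq_0_iff[of B "\<lambda>I. w (c I) - Lw w (p I)"] le by auto
  then have "\<forall>I\<in>B. p I = axis (c I) 1"
    using Lw_eq_simplex p assms(1) by force
  then show ?thesis unfolding y pt_def by (auto intro: sum.cong)
qed

lemma pt_comp: "pt B c $ k = real (card {I\<in>B. c I = k})"
proof -
  have "pt B c $ k = (\<Sum>I\<in>B. if c I = k then 1 else 0)"
    by (simp add: pt_def axis_comp eq_commute)
  also have "\<dots> = real (card {I\<in>B. c I = k})"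
    by (simp add: sum.inter_filter[symmetric])
  finally show ?thesis .
qed

lemma exists_argmax:
  assumes "finite I" "I \<noteq> {}"
  shows "\<exists>m\<in>I. \<forall>k\<in>I. (w::'a \<Rightarrow> real) k \<le> w m"
proof -
  have "Max (w ` I) \<in> w ` I" using assms by auto
  then obtain m where "m \<in> I" "w m = Max (w ` I)" by auto
  then show ?thesis using assms by (metis Max_ge finite_imageI imageI)
qed

lemma unique_imp_umax:
  fixes B :: "('a::finite) set set"
  assumes ne: "\<forall>I\<in>B. I \<noteq> {}"
    and uq: "\<exists>!x. ismax w (nestohedron B) x"
  shows "\<forall>I\<in>B. \<exists>m. umax w I m"
proof -
  define c where "c I = (SOME m. m \<in> I \<and> (\<forall>k\<in>I. w k \<le> w m))" for I
  have c: "\<forall>I\<in>B. c I \<in> I \<and> (\<forall>k\<in>I. w k \<le> w (c I))"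
  proof
    fix I assume "I \<in> B"
    then have "\<exists>m. m \<in> I \<and> (\<forall>k\<in>I. w k \<le> w m)" using exists_argmax[of I w] ne by auto
    then show "c I \<in> I \<and> (\<forall>k\<in>I. w k \<le> w (c I))" unfolding c_def by (rule someI_ex)
  qed
  show ?thesis
  proof (rule ccontr)
    assume "\<not> ?thesis"
    then obtain I where I: "I \<in> B" and nu: "\<not> umax w I (c I)" by blast
    then obtain k where k: "k \<in> I" "k \<noteq> c I" "\<not> w k < w (c I)"
      using c unfolding umax_def by auto
    with c I have wk: "w k = w (c I)" by force
    define c' where "c' = c(I := k)"
    have c': "\<forall>J\<in>B. c' J \<in> J \<and> (\<forall>k'\<in>J. w k' \<le> w (c' J))"
      using c k wk I by (auto simp: c'_def)
    have m1: "ismax w (nestohedron B) (pt B c)" using c by (intro pt_ismax) auto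
    have m2: "ismax w (nestohedron B) (pt B c')" using c' by (intro pt_ismax) auto
    from uq m1 m2 have eq: "pt B c = pt B c'" by blast
    have fin: "finite B" by simp
    have "{J\<in>B. c' J = k} = insert I {J\<in>B. c J = k}"
      using I k by (auto simp: c'_def)
    moreover have "I \<notin> {J\<in>B. c J = k}" using k by auto
    ultimately have "card {J\<in>B. c' J = k} = Suc (card {J\<in>B. c J = k})"
      by simp
    moreover have "card {J\<in>B. c' J = k} = card {J\<in>B. c J = k}"
      using arg_cong[OF eq, of "\<lambda>x. x $ k"] by (simp add: pt_comp)
    ultimately show False by simp
  qed
qed

lemma Lw_comb: "Lw w ((1 - u) *\<^sub>R a + u *\<^sub>R b) = (1 - u) * Lw w a + u * Lw w b"
  by (simp add: Lw_def algebra_simps sum.distrib sum_distrib_left sum_subtractf)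

lemma unique_max_extreme:
  assumes m: "ismax w P x" and u: "\<And>y. ismax w P y \<Longrightarrow> y = x"
  shows "x extreme_point_of P"
  unfolding extreme_point_of_def
proof (intro conjI ballI)
  show "x \<in> P" using m by (simp add: ismax_def)
  fix a b assume a: "a \<in> P" and b: "b \<in> P"
  show "x \<notin> open_segment a b"
  proof
    assume xs: "x \<in> open_segment a b"
    then obtain t where t: "0 < t" "t < 1" and x: "x = (1 - t) *\<^sub>R a + t *\<^sub>R b"
      by (auto simp: in_segment)
    have la: "Lw w a \<le> Lw w x" and lb: "Lw w b \<le> Lw w x" using m a b by (auto simp: ismax_def)
    have lx: "Lw w x = (1 - t) * Lw w a + t * Lw w b" using x Lw_comb by simp
    have "Lw w a = Lw w x"
    proof (rule ccontr)
      assume "Lw w a \<noteq> Lw w x"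
      with la have "Lw w a < Lw w x" by simp
      then have "(1 - t) * Lw w a < (1 - t) * Lw w x" using t by simp
      moreover have "t * Lw w b \<le> t * Lw w x" using lb t by simp
      ultimately show False using lx by (simp add: algebra_simps)
    qed
    then have "ismax w P a" using m a by (simp add: ismax_def)
    then have "a = x" using u by blast
    with xs show False by (simp add: open_segment_def)
  qed
qed

definition good :: "('a::finite) set set \<Rightarrow> ('a \<Rightarrow> nat) \<Rightarrow> ('a set \<Rightarrow> 'a) \<Rightarrow> bool" where
  "good B f c \<longleftrightarrow> (\<forall>i. 0 < f i) \<and> (\<forall>I\<in>B. umax (\<lambda>i. real (f i)) I (c I))"

lemma vertex_good:
  fixes B :: "('a::finite) set set"
  assumes ne: "\<forall>I\<in>B. I \<noteq> {}" and v: "v \<in> vertices (nestohedron B)"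
  shows "\<exists>f c. good B f c \<and> v = pt B c"
proof -
  let ?P = "nestohedron B"
  from v have ve: "v extreme_point_of ?P" by (simp add: vertices_def)
  then have "{v} face_of ?P" by (simp add: face_of_singleton)
  then have "{v} exposed_face_of ?P" using exposed_face_of_polyhedron[OF nesto_polyhedron[of B]] by blast
  then have ex: "{v} = ?P \<or> (\<exists>a b. a \<noteq> 0 \<and> ?P \<subseteq> {x. a \<bullet> x \<le> b} \<and> {v} = ?P \<inter> {x. a \<bullet> x = b})"
    unfolding exposed_face_of by blast
  have vP: "v \<in> ?P" using ve by (simp add: extreme_point_of_def)
  obtain w where uw: "\<And>y. ismax w ?P y \<longleftrightarrow> y = v"
  proof (cases "{v} = ?P")
    case True
    show ?thesis
    proof (rule that[of "\<lambda>_. 0"])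
      fix y show "ismax (\<lambda>_. 0) ?P y \<longleftrightarrow> y = v"
        unfolding ismax_def Lw_def True[symmetric] by simp
    qed
  next
    case False
    with ex obtain a b where ab: "?P \<subseteq> {x. a \<bullet> x \<le> b}" "{v} = ?P \<inter> {x. a \<bullet> x = b}" by blast
    have L: "\<And>x. Lw (\<lambda>i. a $ i) x = a \<bullet> x" by (simp add: Lw_def inner_vec_def)
    have vb: "a \<bullet> v = b" using ab(2) by auto
    show ?thesis
    proof (rule that[of "\<lambda>i. a $ i"])
      fix y
      show "ismax (\<lambda>i. a $ i) ?P y \<longleftrightarrow> y = v"
      proof
        assume "ismax (\<lambda>i. a $ i) ?P y"
        then have "y \<in> ?P" "a \<bullet> v \<le> a \<bullet> y" using vP by (auto simp: ismax_def L)
        moreover have "a \<bullet> y \<le> b" using ab(1) \<open>y \<in> ?P\<close> by blast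
        ultimately have "y \<in> ?P \<inter> {x. a \<bullet> x = b}" using vb by simp
        with ab(2) show "y = v" by blast
      next
        assume "y = v" then show "ismax (\<lambda>i. a $ i) ?P y"
          using vP ab vb by (auto simp: ismax_def L)
      qed
    qed
  qed
  have "\<forall>I\<in>B. \<exists>m. umax w I m"
  proof (rule unique_imp_umax[OF ne])
    show "\<exists>!x. ismax w ?P x"
    proof (rule ex1I[of _ v])
      show "ismax w ?P v" using uw by simp
    next
      fix y assume "ismax w ?P y" then show "y = v" using uw by simp
    qed
  qed
  then obtain c where c: "\<forall>I\<in>B. umax w I (c I)" using bchoice[of B "\<lambda>I m. umax w I m"] by blast
  have "ismax w ?P (pt B c)"
  proof (rule pt_ismax)
    show "\<forall>I\<in>B. c I \<in> I" using c by (simp add: umax_def)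
    fix I k assume "I \<in> B" "k \<in> I"
    from c \<open>I \<in> B\<close> have "umax w I (c I)" by blast
    then show "w k \<le> w (c I)" using \<open>k \<in> I\<close> by (rule umax_le)
  qed
  then have vc: "v = pt B c" using uw[of "pt B c"] by blast
  define f where "f i = Suc (card {j. w j < w i})" for i
  have "good B f c"
    unfolding good_def
  proof (intro conjI allI ballI)
    fix i show "0 < f i" by (simp add: f_def)
  next
    fix I assume I: "I \<in> B"
    show "umax (\<lambda>i. real (f i)) I (c I)"
      unfolding umax_def
    proof (intro conjI ballI impI)
      show "c I \<in> I" using c I by (simp add: umax_def)
      fix k assume "k \<in> I" "k \<noteq> c I"
      then have wk: "w k < w (c I)" using c I by (simp add: umax_def)
      have s1: "{j. w j < w k} \<subseteq> {j. w j < w (c I)}" using wk by auto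
      have s2: "k \<in> {j. w j < w (c I)}" "k \<notin> {j. w j < w k}" using wk by auto
      have "{j. w j < w k} \<subset> {j. w j < w (c I)}" using s1 s2 by blast
      then have "card {j. w j < w k} < card {j. w j < w (c I)}"
        by (rule psubset_card_mono[rotated]) simp
      then show "real (f k) < real (f (c I))" by (simp only: f_def of_nat_less_iff Suc_less_eq)
    qed
  qed
  with vc show ?thesis by blast
qed

lemma union_fam:
  assumes bs: "building_set B" and fin: "finite F" and ne: "F \<noteq> {}" and sub: "F \<subseteq> B"
    and x: "\<forall>J\<in>F. x \<in> J"
  shows "\<Union>F \<in> B"
  using fin ne sub x
proof (induction F rule: finite_ne_induct)
  case (singleton J) then show ?case by simp
next
  case (insert J F)
  then have "\<Union>F \<in> B" "J \<in> B" "x \<in> J" "x \<in> \<Union>F" by auto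
  then have "J \<union> \<Union>F \<in> B" using bs unfolding building_set_def by blast
  then show ?case by simp
qed

lemma sum_pt:
  fixes B :: "('a::finite) set set"
  shows "(\<Sum>i\<in>I. pt B c $ i) = real (card {J\<in>B. c J \<in> I})"
proof -
  have "(\<Sum>i\<in>I. pt B c $ i) = real (\<Sum>i\<in>I. card {J\<in>B. c J = i})"
    by (simp add: pt_comp)
  also have "(\<Sum>i\<in>I. card {J\<in>B. c J = i}) = card (\<Union>i\<in>I. {J\<in>B. c J = i})"
    by (rule card_UN_disjoint[symmetric]) auto
  also have "(\<Union>i\<in>I. {J\<in>B. c J = i}) = {J\<in>B. c J \<in> I}" by auto
  finally show ?thesis .
qed

lemma pt_inj:
  assumes g: "good B f c" and c': "\<forall>I\<in>B. c' I \<in> I" and eq: "pt B c' = pt B c"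
  shows "\<forall>I\<in>B. c' I = c I"
proof -
  let ?w = "\<lambda>i. real (f i)"
  have u: "\<forall>I\<in>B. umax ?w I (c I)" using g by (simp add: good_def)
  have le: "\<forall>I\<in>B. ?w (c' I) \<le> ?w (c I)"
  proof
    fix I assume "I \<in> B"
    then show "?w (c' I) \<le> ?w (c I)" using umax_le[of ?w I "c I" "c' I"] u c' by simp
  qed
  have "(\<Sum>I\<in>B. ?w (c I) - ?w (c' I)) = 0"
    using arg_cong[OF eq, of "Lw ?w"] by (simp add: Lw_pt sum_subtractf)
  then have "\<forall>I\<in>B. ?w (c I) - ?w (c' I) = 0"
    using sum_nonneg_eq_0_iff[of B "\<lambda>I. ?w (c I) - ?w (c' I)"] le by auto
  then show ?thesis
  proof (intro ballI)
    fix I assume I: "I \<in> B" and z: "\<forall>I\<in>B. ?w (c I) - ?w (c' I) = 0"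
    then have "f (c I) = f (c' I)" by simp
    moreover have "c' I \<in> I" using c' I by blast
    ultimately show "c' I = c I" using u I unfolding umax_def by (metis less_irrefl)
  qed
qed

locale nest =
  fixes B :: "('a::finite) set set" and f :: "'a \<Rightarrow> nat" and c :: "'a set \<Rightarrow> 'a"
  assumes bs: "building_set B" and univ: "UNIV \<in> B" and gd: "good B f c"
begin

lemma sing: "{x} \<in> B" using bs by (simp add: building_set_def)
lemma un: "I \<in> B \<Longrightarrow> J \<in> B \<Longrightarrow> I \<inter> J \<noteq> {} \<Longrightarrow> I \<union> J \<in> B"
  using bs by (simp add: building_set_def)
lemma um: "I \<in> B \<Longrightarrow> umax (\<lambda>i. real (f i)) I (c I)" using gd by (simp add: good_def)
lemma cin: "I \<in> B \<Longrightarrow> c I \<in> I" using um by (simp add: umax_def)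
lemma lt: "I \<in> B \<Longrightarrow> k \<in> I \<Longrightarrow> k \<noteq> c I \<Longrightarrow> f k < f (c I)"
  using um by (simp add: umax_def)
lemma le: "I \<in> B \<Longrightarrow> k \<in> I \<Longrightarrow> f k \<le> f (c I)"
  using lt by (cases "k = c I") (auto simp: less_imp_le)
lemma eqm: "I \<in> B \<Longrightarrow> k \<in> I \<Longrightarrow> f (c I) \<le> f k \<Longrightarrow> k = c I"
  using lt by fastforce
lemma csing: "c {x} = x" using cin[OF sing] by simp

definition K :: "'a \<Rightarrow> 'a set" where "K i = \<Union>{J\<in>B. c J = i}"

lemma K_B: "K i \<in> B"
  unfolding K_def
proof (rule union_fam[OF bs])
  show "finite {J\<in>B. c J = i}" by simp
  show "{J\<in>B. c J = i} \<noteq> {}" using sing[of i] csing[of i] by blast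
  show "{J\<in>B. c J = i} \<subseteq> B" by auto
  show "\<forall>J\<in>{J\<in>B. c J = i}. i \<in> J" using cin by auto
qed

lemma iK: "i \<in> K i" unfolding K_def using sing[of i] csing[of i] by blast
lemma subK: "J \<in> B \<Longrightarrow> c J = i \<Longrightarrow> J \<subseteq> K i" unfolding K_def by blast
lemma leK: "k \<in> K i \<Longrightarrow> f k \<le> f i" unfolding K_def using le by blast
lemma cK: "c (K i) = i"
proof -
  have "f (c (K i)) \<le> f i" using leK cin[OF K_B] by blast
  then have "i = c (K i)" using eqm[OF K_B iK] by blast
  then show ?thesis by simp
qed
lemma Kinj: "K i = K j \<Longrightarrow> i = j" using cK by metis

definition closed :: "'a set \<Rightarrow> bool" where
  "closed I \<longleftrightarrow> I \<in> B \<and> (\<forall>J\<in>B. c J \<in> I \<longrightarrow> J \<subseteq> I)"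

lemma closedK: "closed (K i)"
  unfolding closed_def
proof (intro conjI ballI impI)
  show "K i \<in> B" by (rule K_B)
  fix J assume J: "J \<in> B" "c J \<in> K i"
  have U: "J \<union> K i \<in> B" using un[OF J(1) K_B] J cin by blast
  have "\<forall>k\<in>J \<union> K i. f k \<le> f i"
  proof
    fix k assume "k \<in> J \<union> K i"
    then show "f k \<le> f i"
    proof
      assume "k \<in> J" then have "f k \<le> f (c J)" using le J by blast
      also have "\<dots> \<le> f i" using leK J by blast
      finally show ?thesis .
    next
      assume "k \<in> K i" then show ?thesis using leK by blast
    qed
  qed
  then have "f (c (J \<union> K i)) \<le> f i" using cin[OF U] by blast
  then have "i = c (J \<union> K i)" using eqm[OF U] iK by blast
  then have "J \<union> K i \<subseteq> K i" using subK[OF U] by simp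
  then show "J \<subseteq> K i" by blast
qed

lemma closed_eq: "closed I \<Longrightarrow> I = K (c I)"
proof -
  assume cl: "closed I"
  then have IB: "I \<in> B" by (simp add: closed_def)
  have "I \<subseteq> K (c I)" using subK[OF IB] by simp
  moreover have "K (c I) \<subseteq> I" using cl K_B cK cin[OF IB] unfolding closed_def by metis
  ultimately show ?thesis by blast
qed

lemma closed_UNIV: "closed UNIV" using univ by (simp add: closed_def)

lemma facet_iff:
  assumes IB: "I \<in> B"
  shows "pt B c \<in> facet B I \<longleftrightarrow> closed I"
proof -
  have mem: "pt B c \<in> nestohedron B" using pt_mem cin by blast
  have sub: "{J\<in>B. J \<subseteq> I} \<subseteq> {J\<in>B. c J \<in> I}" using cin by blast
  have "pt B c \<in> facet B I \<longleftrightarrow> card {J\<in>B. c J \<in> I} = card {J\<in>B. J \<subseteq> I}"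
    using mem by (simp add: facet_def sum_pt)
  also have "\<dots> \<longleftrightarrow> {J\<in>B. J \<subseteq> I} = {J\<in>B. c J \<in> I}"
  proof
    assume "card {J\<in>B. c J \<in> I} = card {J\<in>B. J \<subseteq> I}"
    then show "{J\<in>B. J \<subseteq> I} = {J\<in>B. c J \<in> I}"
      using card_subset_eq[OF _ sub] by simp
  next
    assume "{J\<in>B. J \<subseteq> I} = {J\<in>B. c J \<in> I}"
    then show "card {J\<in>B. c J \<in> I} = card {J\<in>B. J \<subseteq> I}" by simp
  qed
  also have "\<dots> \<longleftrightarrow> closed I"
  proof
    assume eq: "{J\<in>B. J \<subseteq> I} = {J\<in>B. c J \<in> I}"
    show "closed I" unfolding closed_def
    proof (intro conjI ballI impI)
      show "I \<in> B" by (rule IB)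
      fix J assume "J \<in> B" "c J \<in> I"
      then have "J \<in> {J\<in>B. c J \<in> I}" by simp
      then have "J \<in> {J\<in>B. J \<subseteq> I}" by (simp only: eq)
      then show "J \<subseteq> I" by simp
    qed
  next
    assume "closed I" then show "{J\<in>B. J \<subseteq> I} = {J\<in>B. c J \<in> I}"
      using sub unfolding closed_def by blast
  qed
  finally show ?thesis .
qed

abbreviation "vv \<equiv> pt B c"

lemma nested_eq: "nested_of B vv = {I. closed I \<and> I \<noteq> UNIV}"
  unfolding nested_of_def using facet_iff by (auto simp: closed_def)

lemma NU: "I \<in> nested_of B vv \<union> {UNIV} \<longleftrightarrow> closed I"
  using nested_eq closed_UNIV by auto

lemma elem: "closed I \<Longrightarrow> elem_of B vv I = c I"
  unfolding elem_of_def
proof (rule the_equality)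
  assume cl: "closed I"
  then have IB: "I \<in> B" by (simp add: closed_def)
  show "c I \<in> I - \<Union>{J \<in> nested_of B vv. J \<subset> I}"
  proof -
    have "c I \<notin> J" if "J \<in> nested_of B vv" "J \<subset> I" for J
    proof
      assume "c I \<in> J"
      with that IB have "I \<subseteq> J" by (auto simp: nested_eq closed_def)
      with that show False by blast
    qed
    then show ?thesis using cin[OF IB] by blast
  qed
  fix x assume x: "x \<in> I - \<Union>{J \<in> nested_of B vv. J \<subset> I}"
  show "x = c I"
  proof (rule ccontr)
    assume ne: "x \<noteq> c I"
    have "K x \<subseteq> I" using cl K_B cK x unfolding closed_def by (metis DiffD1)
    moreover have "K x \<noteq> I" using closed_eq[OF cl] ne Kinj by metis
    ultimately have "K x \<in> nested_of B vv" "K x \<subset> I" using closedK by (auto simp: nested_eq)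
    with x iK show False by blast
  qed
qed

lemma bleq_iff: "bleq B vv i j \<longleftrightarrow> K i \<subseteq> K j"
proof
  assume "bleq B vv i j"
  then obtain I J where IJ: "closed I" "closed J" "i = elem_of B vv I" "j = elem_of B vv J" "I \<subseteq> J"
    unfolding bleq_def Bex_def NU by blast
  then have "i = c I" "j = c J" using elem by auto
  then show "K i \<subseteq> K j" using IJ closed_eq by metis
next
  assume "K i \<subseteq> K j"
  moreover have "elem_of B vv (K i) = i" "elem_of B vv (K j) = j" using elem closedK cK by auto
  ultimately show "bleq B vv i j" unfolding bleq_def Bex_def NU using closedK by metis
qed

lemma bless_iff: "bless B vv i j \<longleftrightarrow> K i \<subset> K j"
  unfolding bless_def bleq_iff using Kinj by blast

lemma chain:
  assumes tp: "\<forall>u w. tree_parent B vv u w \<longrightarrow> h u < h w"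
  shows "K u \<subset> K w \<Longrightarrow> (h u :: nat) < h w"
proof -
  have "\<forall>u w. card (K w - K u) = n \<longrightarrow> K u \<subset> K w \<longrightarrow> h u < h w" for n
  proof (induction n rule: less_induct)
    case (less n)
    show ?case
    proof (intro allI impI)
      fix u w assume n: "card (K w - K u) = n" and s: "K u \<subset> K w"
      show "h u < h w"
      proof (cases "tree_parent B vv u w")
        case True with tp show ?thesis by blast
      next
        case False
        with s obtain z where z: "K u \<subset> K z" "K z \<subset> K w"
          unfolding tree_parent_def bless_iff by blast
        have "K w - K z \<subset> K w - K u" using z by blast
        then have c1: "card (K w - K z) < n" using n psubset_card_mono[of "K w - K u" "K w - K z"] by simp
        have "K z - K u \<subset> K w - K u" using z by blast
        then have c2: "card (K z - K u) < n" using n psubset_card_mono[of "K w - K u" "K z - K u"] by simp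
        have "h u < h z" using less.IH[OF c2] z by blast
        also have "h z < h w" using less.IH[OF c1] z by blast
        finally show ?thesis .
      qed
    qed
  qed
  then show "K u \<subset> K w \<Longrightarrow> h u < h w" by blast
qed

lemma tp_iff: "tree_partition B vv h \<longleftrightarrow> good B h c"
proof
  assume tp: "tree_partition B vv h"
  then have pos: "\<forall>u. 0 < h u" and par: "\<forall>u w. tree_parent B vv u w \<longrightarrow> h u < h w"
    by (auto simp: tree_partition_def)
  have "umax (\<lambda>i. real (h i)) I (c I)" if IB: "I \<in> B" for I
    unfolding umax_def
  proof (intro conjI ballI impI)
    show "c I \<in> I" using cin[OF IB] .
    fix k assume k: "k \<in> I" "k \<noteq> c I"
    have kK: "k \<in> K (c I)" using subK[OF IB refl] k by blast
    have "K k \<subseteq> K (c I)"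
      using closedK[of "c I"] K_B[of k] cK[of k] kK unfolding closed_def by simp
    moreover have "K k \<noteq> K (c I)" using Kinj k by blast
    ultimately have "h k < h (c I)" using chain[OF par] by blast
    then show "real (h k) < real (h (c I))" by simp
  qed
  with pos show "good B h c" by (simp add: good_def)
next
  assume g: "good B h c"
  show "tree_partition B vv h"
    unfolding tree_partition_def
  proof (intro conjI allI impI)
    fix u show "0 < h u" using g by (simp add: good_def)
  next
    fix u w assume "tree_parent B vv u w"
    then have s: "K u \<subset> K w" by (simp add: tree_parent_def bless_iff)
    then have "u \<in> K w" "u \<noteq> c (K w)" using iK cK by auto
    then have "real (h u) < real (h (c (K w)))"
      using g K_B unfolding good_def umax_def by blast
    then show "h u < h w" using cK by simp
  qed
qed

end


lemma good_generic:
  assumes g: "good B h c"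
  shows "\<exists>!x. ismax (\<lambda>i. real (h i)) (nestohedron B) x"
    and "\<And>x. ismax (\<lambda>i. real (h i)) (nestohedron B) x \<Longrightarrow> x = pt B c"
proof -
  let ?w = "\<lambda>i. real (h i)"
  have u: "\<forall>I\<in>B. umax ?w I (c I)" using g by (simp add: good_def)
  have cin: "\<forall>I\<in>B. c I \<in> I" using u by (simp add: umax_def)
  have m: "ismax ?w (nestohedron B) (pt B c)"
  proof (rule pt_ismax[OF cin])
    fix I k assume "I \<in> B" "k \<in> I"
    then show "?w k \<le> ?w (c I)" using umax_le[of ?w I "c I" k] u by simp
  qed
  have uq: "x = pt B c" if "ismax ?w (nestohedron B) x" for x
  proof (rule pt_unique[OF u])
    show "x \<in> nestohedron B" using that by (simp add: ismax_def)
    have "Lw ?w x \<le> Lw ?w (pt B c)" "Lw ?w (pt B c) \<le> Lw ?w x"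
      using that m by (auto simp: ismax_def)
    then show "Lw ?w x = Lw ?w (pt B c)" by simp
  qed
  show "\<exists>!x. ismax ?w (nestohedron B) x" using m uq by blast
  fix x assume "ismax ?w (nestohedron B) x" then show "x = pt B c" using uq by blast
qed

lemma good_same:
  assumes "good B h c" "good B h c'"
  shows "\<forall>I\<in>B. c I = c' I"
proof
  fix I assume I: "I \<in> B"
  have a: "umax (\<lambda>i. real (h i)) I (c I)" "umax (\<lambda>i. real (h i)) I (c' I)"
    using assms I by (auto simp: good_def)
  show "c I = c' I"
  proof (rule ccontr)
    assume ne: "c I \<noteq> c' I"
    have "h (c I) < h (c' I)" using a ne unfolding umax_def by auto
    moreover have "h (c' I) < h (c I)" using a ne unfolding umax_def by auto
    ultimately show False by simp
  qed
qed

lemma generic_iff: "generic Q h \<longleftrightarrow> (\<exists>!x. ismax (\<lambda>i. real (h i)) Q x)"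
  by (simp add: generic_def ismax_def Lw_def)

lemma finite_mon: "finite {h :: 'a::finite \<Rightarrow> nat. monomial_of h = M}"
proof (rule finite_subset)
  show "{h :: 'a \<Rightarrow> nat. monomial_of h = M} \<subseteq>
        {h. \<forall>x. (x \<in> UNIV \<longrightarrow> h x \<in> set_mset M) \<and> (x \<notin> UNIV \<longrightarrow> h x = 0)}"
    by (auto simp: monomial_of_def)
  show "finite {h :: 'a \<Rightarrow> nat. \<forall>x. (x \<in> UNIV \<longrightarrow> h x \<in> set_mset M) \<and> (x \<notin> UNIV \<longrightarrow> h x = 0)}"
    by (rule finite_set_of_finite_funs) auto
qed

theorem mainTheorem6:
  fixes B :: "('a::finite) set set"
  assumes "connected_building_set B"
  shows "\<forall>M. F_poly_coeff (nestohedron B) M =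
             (\<Sum>v\<in>vertices (nestohedron B). F_tree_coeff B v M)"
proof
  fix M
  let ?P = "nestohedron B"
  let ?V = "vertices ?P"
  have bs: "building_set B" and univ: "UNIV \<in> B"
    using assms by (auto simp: connected_building_set_def)
  have ne: "\<forall>I\<in>B. I \<noteq> {}" using bs by (simp add: building_set_def)
  define fv where "fv v = (SOME f. \<exists>c. good B f c \<and> v = pt B c)" for v
  define cv where "cv v = (SOME c. good B (fv v) c \<and> v = pt B c)" for v
  have fc: "good B (fv v) (cv v) \<and> v = pt B (cv v)" if "v \<in> ?V" for v
  proof -
    have "\<exists>f c. good B f c \<and> v = pt B c" using vertex_good[OF ne that] .
    then have "\<exists>c. good B (fv v) c \<and> v = pt B c" unfolding fv_def by (rule someI_ex)
    then show ?thesis unfolding cv_def by (rule someI_ex)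
  qed
  define S where "S v = {h. tree_partition B v h \<and> monomial_of h = M}" for v
  have Seq: "S v = {h. good B h (cv v) \<and> monomial_of h = M}" if "v \<in> ?V" for v
  proof -
    interpret nest B "fv v" "cv v" using bs univ fc[OF that] by unfold_locales auto
    have "v = pt B (cv v)" using fc[OF that] by simp
    then show ?thesis unfolding S_def using tp_iff by simp
  qed
  define T where "T = {h. (\<forall>i. 0 < h i) \<and> generic ?P h \<and> monomial_of h = M}"
  have TU: "T = (\<Union>v\<in>?V. S v)"
  proof
    show "T \<subseteq> (\<Union>v\<in>?V. S v)"
    proof
      fix h assume hT: "h \<in> T"
      let ?w = "\<lambda>i. real (h i)"
      have gen: "\<exists>!x. ismax ?w ?P x" using hT by (simp add: T_def generic_iff)
      have "\<forall>I\<in>B. \<exists>m. umax ?w I m" by (rule unique_imp_umax[OF ne gen])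
      then obtain c' where c': "\<forall>I\<in>B. umax ?w I (c' I)"
        using bchoice[of B "\<lambda>I m. umax ?w I m"] by blast
      have gc': "good B h c'" using c' hT by (simp add: good_def T_def)
      let ?x = "pt B c'"
      have "?x extreme_point_of ?P"
      proof (rule unique_max_extreme)
        show "ismax ?w ?P ?x" using good_generic(1,2)[OF gc'] by blast
        fix y assume "ismax ?w ?P y" then show "y = ?x" using good_generic(2)[OF gc'] by blast
      qed
      then have xV: "?x \<in> ?V" by (simp add: vertices_def)
      have cin': "\<forall>I\<in>B. c' I \<in> I" using c' by (simp add: umax_def)
      have "\<forall>I\<in>B. c' I = cv ?x I"
      proof (rule pt_inj[of B "fv ?x"])
        show "good B (fv ?x) (cv ?x)" using fc[OF xV] by blast
        show "\<forall>I\<in>B. c' I \<in> I" by (rule cin')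
        show "pt B c' = pt B (cv ?x)" using fc[OF xV] by simp
      qed
      then have "good B h (cv ?x)" using gc' unfolding good_def by simp
      then have "h \<in> S ?x" using Seq[OF xV] hT by (simp add: T_def)
      with xV show "h \<in> (\<Union>v\<in>?V. S v)" by blast
    qed
  next
    show "(\<Union>v\<in>?V. S v) \<subseteq> T"
    proof
      fix h assume "h \<in> (\<Union>v\<in>?V. S v)"
      then obtain v where v: "v \<in> ?V" "h \<in> S v" by blast
      then have g: "good B h (cv v)" and mo: "monomial_of h = M" using Seq by auto
      have "generic ?P h" using good_generic(1)[OF g] by (simp add: generic_iff)
      with g mo show "h \<in> T" by (simp add: T_def good_def)
    qed
  qed
  have finV: "finite ?V"
  proof (rule finite_subset)
    show "?V \<subseteq> (\<Sum>I\<in>B. (\<lambda>i. axis i (1::real)) ` I)"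
      unfolding vertices_def nesto_hull using extreme_point_of_convex_hull by blast
    show "finite (\<Sum>I\<in>B. (\<lambda>i. axis i (1::real)) ` I)" by (rule finite_set_sum) auto
  qed
  have finS: "\<forall>v\<in>?V. finite (S v)"
  proof
    fix v show "finite (S v)" unfolding S_def
      by (rule finite_subset[OF _ finite_mon[of M]]) blast
  qed
  have disj: "\<forall>v\<in>?V. \<forall>v'\<in>?V. v \<noteq> v' \<longrightarrow> S v \<inter> S v' = {}"
  proof (intro ballI impI)
    fix v v' assume v: "v \<in> ?V" and v': "v' \<in> ?V" and nv: "v \<noteq> v'"
    show "S v \<inter> S v' = {}"
    proof (rule ccontr)
      assume "S v \<inter> S v' \<noteq> {}"
      then obtain h where "h \<in> S v" "h \<in> S v'" by blast
      then have "good B h (cv v)" "good B h (cv v')" using Seq v v' by auto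
      then have "\<forall>I\<in>B. cv v I = cv v' I" by (rule good_same)
      then have "pt B (cv v) = pt B (cv v')" by (rule pt_cong)
      then show False using fc[OF v] fc[OF v'] nv by simp
    qed
  qed
  have "card T = (\<Sum>v\<in>?V. card (S v))"
    unfolding TU by (rule card_UN_disjoint[OF finV finS disj])
  then show "F_poly_coeff ?P M = (\<Sum>v\<in>?V. F_tree_coeff B v M)"
    unfolding F_poly_coeff_def F_tree_coeff_def T_def S_def by simp
qed

end
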